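(* Let $K$ be a finite simplicial complex and $\gamma=[c]\in H_1(K;\mathbb{R})$. If $C\subseteq K^{(1)}$ is an inclusion-minimal homological edge cut for $\gamma$ (i.e. $C$ is a homological edge cut for $\gamma$ but $C\setminus\{e\}$ is not, for every $e\in C$), then there exists a cocycle $\varphi\in C^1(K;\mathbb{R})$ (i.e. $\partial^*\varphi=0$) with $\mathrm{Supp}(\varphi)=C$ and $\varphi(c)=1$.
   Context: For $A\subseteq K$, $K-A$ is the largest subcomplex of $K$ containing no simplex of $A$. $C\subseteq K^{(1)}$ (edges of $K$) is a homological edge cut for $\gamma\in H_1(K;\mathbb{R})$ if $\gamma\notin\mathrm{Im}(H_1(K-C;\mathbb{R})\to H_1(K;\mathbb{R}))$, the map induced by inclusion. $C^1(K;\mathbb{R})=\mathrm{Hom}(C_1(K;\mathbb{R}),\mathbb{R})$ with coboundary $(\partial^*\varphi)(\sigma)=\varphi(\partial\sigma)$ for $2$-simplices $\sigma$ (with a fixed orientation of simplices). $\mathrm{Supp}(\varphi)$ is the set of edges $e$ with $\varphi(e)\ne0$. *)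

theory Defs
  imports Complex_Main
begin

text \<open>Finite abstract simplicial complexes on a linearly ordered vertex type.
  Simplices are finite nonempty vertex sets; each simplex is oriented by the
  increasing order of its vertices.\<close>

definition simplicial_complex :: "'v set set \<Rightarrow> bool" where
  "simplicial_complex K \<longleftrightarrow> finite K \<and>
     (\<forall>\<sigma>\<in>K. finite \<sigma> \<and> \<sigma> \<noteq> {}) \<and>
     (\<forall>\<sigma>\<in>K. \<forall>\<tau>. \<tau> \<subseteq> \<sigma> \<and> \<tau> \<noteq> {} \<longrightarrow> \<tau> \<in> K)"

definition simplices :: "'v set set \<Rightarrow> nat \<Rightarrow> 'v set set" where
  "simplices K k = {\<sigma>\<in>K. card \<sigma> = Suc k}"

abbreviation edges :: "'v set set \<Rightarrow> 'v set set" where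
  "edges K \<equiv> simplices K 1"

text \<open>K - A: the largest subcomplex of K containing no simplex of A.\<close>
definition complex_minus :: "'v set set \<Rightarrow> 'v set set \<Rightarrow> 'v set set" where
  "complex_minus K A = {\<sigma>\<in>K. \<forall>\<alpha>\<in>A. \<not> \<alpha> \<subseteq> \<sigma>}"

text \<open>Incidence number [\<sigma> : \<tau>] for the ordered orientation: if \<tau> is the face of
  \<sigma> obtained by deleting its i-th vertex (counting from 0 in increasing order),
  it is (-1)^i; otherwise 0.\<close>
definition incidence :: "'v::linorder set \<Rightarrow> 'v set \<Rightarrow> real" where
  "incidence \<sigma> \<tau> = (if \<tau> \<subseteq> \<sigma> \<and> card \<tau> + 1 = card \<sigma>
      then (-1) ^ card {w\<in>\<sigma>. w < the_elem (\<sigma> - \<tau>)} else 0)"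

definition is_chain :: "'v set set \<Rightarrow> nat \<Rightarrow> ('v set \<Rightarrow> real) \<Rightarrow> bool" where
  "is_chain K k c \<longleftrightarrow> (\<forall>\<sigma>. c \<sigma> \<noteq> 0 \<longrightarrow> \<sigma> \<in> simplices K k)"

definition chain_boundary :: "'v::linorder set set \<Rightarrow> nat \<Rightarrow> ('v set \<Rightarrow> real) \<Rightarrow> ('v set \<Rightarrow> real)" where
  "chain_boundary K k c = (\<lambda>\<tau>. \<Sum>\<sigma>\<in>simplices K k. c \<sigma> * incidence \<sigma> \<tau>)"

definition is_cycle :: "'v::linorder set set \<Rightarrow> nat \<Rightarrow> ('v set \<Rightarrow> real) \<Rightarrow> bool" where
  "is_cycle K k c \<longleftrightarrow> is_chain K k c \<and> (\<forall>\<tau>. chain_boundary K k c \<tau> = 0)"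

definition is_boundary :: "'v::linorder set set \<Rightarrow> nat \<Rightarrow> ('v set \<Rightarrow> real) \<Rightarrow> bool" where
  "is_boundary K k b \<longleftrightarrow> (\<exists>d. is_chain K (Suc k) d \<and> b = chain_boundary K (Suc k) d)"

text \<open>C is a homological edge cut for the class [c] \<in> H_1(K;R): [c] is not in the image of
  H_1(K - C;R) \<rightarrow> H_1(K;R), i.e. there is no 1-cycle z of K - C homologous to c in K.\<close>
definition homological_edge_cut ::
  "'v::linorder set set \<Rightarrow> ('v set \<Rightarrow> real) \<Rightarrow> 'v set set \<Rightarrow> bool" where
  "homological_edge_cut K c C \<longleftrightarrow> C \<subseteq> edges K \<and>
     \<not> (\<exists>z. is_cycle (complex_minus K C) 1 z \<and> is_boundary K 1 (\<lambda>e. c e - z e))"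

definition cochain_eval :: "'v set set \<Rightarrow> ('v set \<Rightarrow> real) \<Rightarrow> ('v set \<Rightarrow> real) \<Rightarrow> real" where
  "cochain_eval K \<phi> c = (\<Sum>e\<in>edges K. \<phi> e * c e)"

definition is_cocycle1 :: "'v::linorder set set \<Rightarrow> ('v set \<Rightarrow> real) \<Rightarrow> bool" where
  "is_cocycle1 K \<phi> \<longleftrightarrow> (\<forall>\<sigma>\<in>simplices K 2. (\<Sum>e\<in>edges K. \<phi> e * incidence \<sigma> e) = 0)"

definition supp1 :: "'v set set \<Rightarrow> ('v set \<Rightarrow> real) \<Rightarrow> 'v set set" where
  "supp1 K \<phi> = {e\<in>edges K. \<phi> e \<noteq> 0}"

end

theory Submission imports Defs "HOL-Library.Function_Algebras" begin

instantiation "fun" :: (type, real_vector) real_vector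
begin
definition scaleR_fun :: "real \<Rightarrow> ('a \<Rightarrow> 'b) \<Rightarrow> 'a \<Rightarrow> 'b" where
  "scaleR_fun r f = (\<lambda>x. r *\<^sub>R f x)"
instance by standard (auto simp: scaleR_fun_def algebra_simps)
end

lemma scaleR_fun_apply[simp]: "(r *\<^sub>R f) x = r *\<^sub>R f x"
  by (simp add: scaleR_fun_def)

lemma sum_fun_apply: "(\<Sum>i\<in>A. f i) x = (\<Sum>i\<in>A. f i x)"
  by (induct A rule: infinite_finite_induct) auto

lemma functional_exists:
  fixes U :: "'a::real_vector set"
  assumes "subspace U" "v \<notin> U"
  shows "\<exists>g::'a\<Rightarrow>real. linear g \<and> (\<forall>x\<in>U. g x = 0) \<and> g v = 1"
proof -
  obtain B where B: "B \<subseteq> U" "independent B" "U \<subseteq> span B"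
    using maximal_independent_subset by blast
  have "span B \<subseteq> U" using B assms(1) by (metis span_minimal)
  hence vB: "v \<notin> span B" using assms by auto
  hence ind: "independent (insert v B)" using B independent_insertI by blast
  obtain g :: "'a \<Rightarrow> real" where g: "linear g" "\<forall>x\<in>insert v B. g x = (if x = v then 1 else 0)"
    using linear_independent_extend[OF ind, of "\<lambda>x. if x = v then (1::real) else 0"] by auto
  have vnB: "v \<notin> B" using vB span_base by blast
  have "\<forall>x\<in>B. g x = 0" using g vnB by auto
  hence "\<forall>x\<in>span B. g x = 0" using linear_eq_0_on_span[OF g(1)] by blast
  thus ?thesis using g B by auto
qed

lemma ord3:
  fixes \<sigma> :: "'v::linorder set"
  assumes "card \<sigma> = 3"
  shows "\<exists>a b c. a < b \<and> b < c \<and> \<sigma> = {a,b,c}"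
proof -
  have fin: "finite \<sigma>" using assms card.infinite by fastforce
  define xs where "xs = sorted_list_of_set \<sigma>"
  have len: "length xs = 3" using assms by (simp add: xs_def)
  have st: "sorted_wrt (<) xs" by (simp add: xs_def)
  have se: "set xs = \<sigma>" using fin by (simp add: xs_def)
  obtain a b c where abc: "xs = [a,b,c]"
  proof -
    from len obtain a r where "xs = a # r" "length r = 2" by (cases xs) auto
    moreover from this obtain b r' where "r = b # r'" "length r' = 1" by (cases r) auto
    moreover from this obtain c where "r' = [c]" by (cases r') auto
    ultimately show ?thesis using that by blast
  qed
  have "a < b" "b < c" using st abc by auto
  moreover have "\<sigma> = {a,b,c}" using se abc by simp
  ultimately show ?thesis by blast
qed

lemma inc_eval:
  "\<tau> \<subseteq> \<sigma> \<Longrightarrow> card \<tau> + 1 = card \<sigma> \<Longrightarrow> \<sigma> - \<tau> = {v} \<Longrightarrow> card {w\<in>\<sigma>. w<v} = n \<Longrightarrow> incidence \<sigma> \<tau> = (-1)^n"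
  by (simp add: incidence_def)

lemma inc2:
  fixes x y :: "'v::linorder"
  assumes xy: "x < y"
  shows "incidence {x,y} \<tau> = (if \<tau> = {y} then 1 else if \<tau> = {x} then -1 else 0)"
proof -
  have ne: "x \<noteq> y" using xy by simp
  have c2: "card {x,y} = 2" using ne by simp
  have iy: "incidence {x,y} {y} = 1"
  proof -
    have "{w\<in>{x,y}. w < x} = {}" using xy by auto
    hence "card {w\<in>{x,y}. w < x} = 0" by simp
    moreover have "{x,y} - {y} = {x}" using ne by auto
    moreover have "card {y} + 1 = card {x,y}" using c2 by simp
    ultimately have "incidence {x,y} {y} = (-1)^0" by (intro inc_eval) auto
    thus ?thesis by simp
  qed
  have ix: "incidence {x,y} {x} = -1"
  proof -
    have "{w\<in>{x,y}. w < y} = {x}" using xy by auto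
    hence "card {w\<in>{x,y}. w < y} = 1" by simp
    moreover have "{x,y} - {x} = {y}" using ne by auto
    moreover have "card {x} + 1 = card {x,y}" using c2 by simp
    ultimately have "incidence {x,y} {x} = (-1)^1" by (intro inc_eval) auto
    thus ?thesis by simp
  qed
  show ?thesis
  proof (cases "\<tau> = {y} \<or> \<tau> = {x}")
    case True thus ?thesis using iy ix ne by auto
  next
    case False
    have "\<not> (\<tau> \<subseteq> {x,y} \<and> card \<tau> + 1 = card {x,y})"
    proof
      assume a: "\<tau> \<subseteq> {x,y} \<and> card \<tau> + 1 = card {x,y}"
      hence "card \<tau> = 1" using c2 by simp
      then obtain w where w: "\<tau> = {w}" using card_1_singletonE by blast
      hence "w \<in> {x,y}" using a by blast
      thus False using False w by blast
    qed
    hence "incidence {x,y} \<tau> = 0" unfolding incidence_def by (rule if_not_P)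
    thus ?thesis using False by simp
  qed
qed

lemma face_in:
  assumes "simplicial_complex K" "\<sigma> \<in> K" "\<tau> \<subseteq> \<sigma>" "\<tau> \<noteq> {}"
  shows "\<tau> \<in> K"
  using assms unfolding simplicial_complex_def by blast

lemma pair3: "x \<in> {a,b,c} \<Longrightarrow> y \<in> {a,b,c} \<Longrightarrow> x \<noteq> y \<Longrightarrow> {x,y} \<in> {{a,b},{a,c},{b,c}}"
  by (auto simp: doubleton_eq_iff)

lemma inc3:
  fixes a b c :: "'v::linorder"
  assumes "a < b" "b < c"
  shows "incidence {a,b,c} {a,b} = 1" "incidence {a,b,c} {a,c} = -1" "incidence {a,b,c} {b,c} = 1"
proof -
  have d: "a \<noteq> b" "a \<noteq> c" "b \<noteq> c" using assms by auto
  have c3: "card {a,b,c} = 3" using d by simp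
  have "{w\<in>{a,b,c}. w < c} = {a,b}" using assms by auto
  hence "card {w\<in>{a,b,c}. w < c} = 2" using d by simp
  moreover have "{a,b,c} - {a,b} = {c}" using d by auto
  moreover have "card {a,b} + 1 = card {a,b,c}" using d c3 by simp
  ultimately have "incidence {a,b,c} {a,b} = (-1)^2" by (intro inc_eval) auto
  thus "incidence {a,b,c} {a,b} = 1" by simp
  have "{w\<in>{a,b,c}. w < b} = {a}" using assms by auto
  hence "card {w\<in>{a,b,c}. w < b} = 1" by simp
  moreover have "{a,b,c} - {a,c} = {b}" using d by auto
  moreover have "card {a,c} + 1 = card {a,b,c}" using d c3 by simp
  ultimately have "incidence {a,b,c} {a,c} = (-1)^1" by (intro inc_eval) auto
  thus "incidence {a,b,c} {a,c} = -1" by simp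
  have "{w\<in>{a,b,c}. w < a} = {}" using assms by auto
  hence "card {w\<in>{a,b,c}. w < a} = 0" by simp
  moreover have "{a,b,c} - {b,c} = {a}" using d by auto
  moreover have "card {b,c} + 1 = card {a,b,c}" using d c3 by simp
  ultimately have "incidence {a,b,c} {b,c} = (-1)^0" by (intro inc_eval) auto
  thus "incidence {a,b,c} {b,c} = 1" by simp
qed

lemma dd_simplex:
  fixes K :: "'v::linorder set set"
  assumes K: "simplicial_complex K" and s: "\<sigma> \<in> simplices K 2"
  shows "(\<Sum>e\<in>edges K. incidence \<sigma> e * incidence e \<tau>) = 0"
proof -
  have "card \<sigma> = 3" using s by (simp add: simplices_def)
  then obtain a b c where abc: "a<b" "b<c" and sig: "\<sigma>={a,b,c}" using ord3 by blast
  have d: "a \<noteq> b" "a \<noteq> c" "b \<noteq> c" using abc by auto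
  have sK: "\<sigma> \<in> K" using s by (simp add: simplices_def)
  have fin: "finite (edges K)" using K by (simp add: simplicial_complex_def simplices_def)
  let ?F = "{{a,b},{a,c},{b,c}}"
  have faces: "\<And>e. e \<subseteq> \<sigma> \<Longrightarrow> e \<noteq> {} \<Longrightarrow> e \<in> K" using K sK face_in by blast
  have "{a,b} \<in> edges K" unfolding simplices_def using faces[of "{a,b}"] d sig by auto
  moreover have "{a,c} \<in> edges K" unfolding simplices_def using faces[of "{a,c}"] d sig by auto
  moreover have "{b,c} \<in> edges K" unfolding simplices_def using faces[of "{b,c}"] d sig by auto
  ultimately have sub: "?F \<subseteq> edges K" by simp
  have zero: "incidence \<sigma> e * incidence e \<tau> = 0" if "e \<in> edges K - ?F" for e
  proof -
    { assume nz: "incidence \<sigma> e \<noteq> 0"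
      have e: "e \<subseteq> \<sigma> \<and> card e + 1 = card \<sigma>"
      proof (rule ccontr)
        assume a: "\<not> (e \<subseteq> \<sigma> \<and> card e + 1 = card \<sigma>)"
        have "incidence \<sigma> e = 0" unfolding incidence_def by (rule if_not_P[OF a])
        thus False using nz by simp
      qed
      hence "card e = 2" using \<open>card \<sigma> = 3\<close> by simp
      then obtain x y where xy: "e = {x,y}" "x \<noteq> y" by (auto simp: card_2_iff)
      have "e \<subseteq> \<sigma>" using e by simp
      hence "x \<in> \<sigma>" "y \<in> \<sigma>" using xy(1) by blast+
      hence "x \<in> {a,b,c}" "y \<in> {a,b,c}" using sig by simp_all
      hence "e \<in> ?F" using pair3[OF _ _ xy(2)] xy(1) by simp
      hence False using that by simp }
    thus ?thesis by auto
  qed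
  have "(\<Sum>e\<in>edges K. incidence \<sigma> e * incidence e \<tau>) = (\<Sum>e\<in>?F. incidence \<sigma> e * incidence e \<tau>)"
    by (rule sum.mono_neutral_right[OF fin sub]) (use zero in blast)
  also have "\<dots> = incidence \<sigma> {a,b} * incidence {a,b} \<tau> + (incidence \<sigma> {a,c} * incidence {a,c} \<tau>
     + incidence \<sigma> {b,c} * incidence {b,c} \<tau>)"
    using d by (simp add: doubleton_eq_iff)
  also have "\<dots> = incidence {a,b} \<tau> - incidence {a,c} \<tau> + incidence {b,c} \<tau>"
    using inc3[OF abc] sig by simp
  also have "\<dots> = 0" using abc d by (simp add: inc2)
  finally show ?thesis .
qed

lemma bd_add: "is_boundary K k x \<Longrightarrow> is_boundary K k y \<Longrightarrow> is_boundary K k (x + y)"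
proof -
  assume "is_boundary K k x" "is_boundary K k y"
  then obtain d1 d2 where d: "is_chain K (Suc k) d1" "x = chain_boundary K (Suc k) d1"
    "is_chain K (Suc k) d2" "y = chain_boundary K (Suc k) d2" by (auto simp: is_boundary_def)
  have "is_chain K (Suc k) (d1 + d2)" unfolding is_chain_def
  proof (intro allI impI)
    fix \<sigma> assume "(d1 + d2) \<sigma> \<noteq> 0"
    hence "d1 \<sigma> \<noteq> 0 \<or> d2 \<sigma> \<noteq> 0" by auto
    thus "\<sigma> \<in> simplices K (Suc k)" using d by (auto simp: is_chain_def)
  qed
  moreover have "x + y = chain_boundary K (Suc k) (d1 + d2)"
    using d by (auto simp: chain_boundary_def sum.distrib distrib_right)
  ultimately show ?thesis by (auto simp: is_boundary_def)
qed

lemma bd_scale: "is_boundary K k x \<Longrightarrow> is_boundary K k (r *\<^sub>R x)"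
proof -
  assume "is_boundary K k x"
  then obtain d1 where d: "is_chain K (Suc k) d1" "x = chain_boundary K (Suc k) d1"
    by (auto simp: is_boundary_def)
  have "is_chain K (Suc k) (r *\<^sub>R d1)" using d by (auto simp: is_chain_def)
  moreover have "r *\<^sub>R x = chain_boundary K (Suc k) (r *\<^sub>R d1)"
    using d by (auto simp: chain_boundary_def sum_distrib_left mult.assoc)
  ultimately show ?thesis by (auto simp: is_boundary_def)
qed

lemma bd_zero: "is_boundary K k 0"
proof -
  have "is_chain K (Suc k) 0" by (auto simp: is_chain_def)
  moreover have "(0::'a set \<Rightarrow> real) = chain_boundary K (Suc k) 0"
    by (auto simp: chain_boundary_def)
  ultimately show ?thesis unfolding is_boundary_def by blast
qed

lemma edge_minus1:
  assumes "A \<subseteq> edges K" "\<sigma> \<in> edges K - A"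
  shows "\<sigma> \<in> simplices (complex_minus K A) 1"
proof -
  have "\<not> \<alpha> \<subseteq> \<sigma>" if "\<alpha> \<in> A" for \<alpha>
  proof
    assume a: "\<alpha> \<subseteq> \<sigma>"
    have "card \<alpha> = 2" "card \<sigma> = 2" using assms that by (auto simp: simplices_def)
    hence "finite \<sigma>" by (metis card.infinite zero_neq_numeral)
    hence "\<alpha> = \<sigma>" using card_subset_eq a \<open>card \<alpha> = 2\<close> \<open>card \<sigma> = 2\<close> by metis
    thus False using assms that by auto
  qed
  thus ?thesis using assms by (auto simp: simplices_def complex_minus_def)
qed

lemma edge_minus2:
  assumes "\<sigma> \<in> simplices (complex_minus K A) 1"
  shows "\<sigma> \<in> edges K - A"
  using assms by (auto simp: simplices_def complex_minus_def)

lemma sum_supp: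
  fixes x f :: "'a \<Rightarrow> real"
  assumes "finite A" "finite B" "\<forall>\<sigma>. x \<sigma> \<noteq> 0 \<longrightarrow> \<sigma> \<in> A \<inter> B"
  shows "(\<Sum>\<sigma>\<in>A. x \<sigma> * f \<sigma>) = (\<Sum>\<sigma>\<in>B. x \<sigma> * f \<sigma>)"
proof -
  have "(\<Sum>\<sigma>\<in>A. x \<sigma> * f \<sigma>) = (\<Sum>\<sigma>\<in>A \<inter> B. x \<sigma> * f \<sigma>)"
    by (rule sum.mono_neutral_right) (use assms in auto)
  also have "\<dots> = (\<Sum>\<sigma>\<in>B. x \<sigma> * f \<sigma>)"
    by (rule sum.mono_neutral_left) (use assms in auto)
  finally show ?thesis .
qed

lemma represent:
  fixes x :: "'a \<Rightarrow> real"
  assumes "finite E" "\<forall>\<sigma>. x \<sigma> \<noteq> 0 \<longrightarrow> \<sigma> \<in> E"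
  shows "x = (\<Sum>e\<in>E. x e *\<^sub>R (\<lambda>y. if y = e then 1 else 0))"
proof
  fix \<tau>
  have "(\<Sum>e\<in>E. x e *\<^sub>R (\<lambda>y. if y = e then 1 else (0::real))) \<tau> = (\<Sum>e\<in>E. if \<tau> = e then x e else 0)"
    by (simp add: sum_fun_apply if_distrib cong: if_cong)
  also have "\<dots> = (if \<tau> \<in> E then x \<tau> else 0)" using assms(1) by simp
  also have "\<dots> = x \<tau>" using assms(2) by auto
  finally show "x \<tau> = (\<Sum>e\<in>E. x e *\<^sub>R (\<lambda>y. if y = e then 1 else 0)) \<tau>" by simp
qed

lemma dd_chain:
  fixes K :: "'v::linorder set set"
  assumes K: "simplicial_complex K"
  shows "chain_boundary K 1 (chain_boundary K 2 dd) \<tau> = 0"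
proof -
  have "chain_boundary K 1 (chain_boundary K 2 dd) \<tau> =
     (\<Sum>e\<in>edges K. \<Sum>\<sigma>\<in>simplices K 2. dd \<sigma> * (incidence \<sigma> e * incidence e \<tau>))"
    by (simp add: chain_boundary_def sum_distrib_right mult.assoc)
  also have "\<dots> = (\<Sum>\<sigma>\<in>simplices K 2. dd \<sigma> * (\<Sum>e\<in>edges K. incidence \<sigma> e * incidence e \<tau>))"
    by (subst sum.swap) (simp add: sum_distrib_left)
  also have "\<dots> = 0" using dd_simplex[OF K] by simp
  finally show ?thesis .
qed

theorem mainTheorem12:
  fixes K :: "'v::linorder set set" and c :: "'v set \<Rightarrow> real" and C :: "'v set set"
  assumes "simplicial_complex K"
    and "is_cycle K 1 c"
    and "homological_edge_cut K c C"
    and "\<forall>e\<in>C. \<not> homological_edge_cut K c (C - {e})"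
  shows "\<exists>\<phi>. is_cocycle1 K \<phi> \<and> supp1 K \<phi> = C \<and> cochain_eval K \<phi> c = 1"
proof -
  note K = assms(1)
  define E where "E = edges K"
  define d where "d = (\<lambda>e::'v set. \<lambda>x::'v set. if x = e then 1 else (0::real))"
  define Bd where "Bd = {x. is_boundary K 1 x}"
  define Off where "Off = {x::'v set \<Rightarrow> real. \<forall>\<sigma>. x \<sigma> \<noteq> 0 \<longrightarrow> \<sigma> \<in> E - C}"
  define U where "U = {b + u | b u. b \<in> Bd \<and> u \<in> Off}"
  have finE: "finite E" using K by (simp add: E_def simplicial_complex_def simplices_def)
  have finT: "finite (simplices K 2)" using K by (simp add: simplicial_complex_def simplices_def)
  have CE: "C \<subseteq> E" using assms(3) by (simp add: homological_edge_cut_def E_def)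
  have finC: "finite C" using CE finE finite_subset by blast
  have cchain: "\<forall>\<sigma>. c \<sigma> \<noteq> 0 \<longrightarrow> \<sigma> \<in> E" using assms(2) by (auto simp: is_cycle_def is_chain_def E_def)
  have subU: "subspace U"
    unfolding subspace_def
  proof (intro conjI ballI allI)
    show "0 \<in> U" unfolding U_def Bd_def Off_def using bd_zero[of K 1]
      by (intro CollectI exI[of _ 0] exI[of _ "0::'v set \<Rightarrow> real"]) auto
  next
    fix x y assume "x \<in> U" "y \<in> U"
    then obtain b1 u1 b2 u2 where h: "x = b1 + u1" "y = b2 + u2" "b1 \<in> Bd" "b2 \<in> Bd" "u1 \<in> Off" "u2 \<in> Off"
      unfolding U_def by blast
    have "x + y = (b1 + b2) + (u1 + u2)" using h by (simp add: algebra_simps)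
    moreover have "b1 + b2 \<in> Bd" using h bd_add by (auto simp: Bd_def)
    moreover have "u1 + u2 \<in> Off" unfolding Off_def
    proof (intro CollectI allI impI)
      fix \<sigma> assume "(u1 + u2) \<sigma> \<noteq> 0"
      hence "u1 \<sigma> \<noteq> 0 \<or> u2 \<sigma> \<noteq> 0" by auto
      thus "\<sigma> \<in> E - C" using h(5,6) by (auto simp: Off_def)
    qed
    ultimately show "x + y \<in> U" unfolding U_def by blast
  next
    fix r :: real and x assume "x \<in> U"
    then obtain b1 u1 where h: "x = b1 + u1" "b1 \<in> Bd" "u1 \<in> Off"
      unfolding U_def by blast
    have "r *\<^sub>R x = r *\<^sub>R b1 + r *\<^sub>R u1" using h by (simp add: algebra_simps)
    moreover have "r *\<^sub>R b1 \<in> Bd" using h bd_scale by (auto simp: Bd_def)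
    moreover have "r *\<^sub>R u1 \<in> Off" using h by (auto simp: Off_def)
    ultimately show "r *\<^sub>R x \<in> U" unfolding U_def by blast
  qed
  have OffU: "Off \<subseteq> U"
  proof
    fix u assume "u \<in> Off"
    moreover have "(0::'v set \<Rightarrow> real) \<in> Bd" using bd_zero by (auto simp: Bd_def)
    ultimately show "u \<in> U" unfolding U_def by (intro CollectI exI[of _ 0] exI[of _ u]) auto
  qed
  have BdU: "Bd \<subseteq> U"
  proof
    fix b assume "b \<in> Bd"
    moreover have "(0::'v set \<Rightarrow> real) \<in> Off" by (auto simp: Off_def)
    ultimately show "b \<in> U" unfolding U_def by (intro CollectI exI[of _ b] exI[of _ 0]) auto
  qed
  have cU: "c \<notin> U"
  proof
    assume "c \<in> U"
    then obtain b u where h: "c = b + u" "b \<in> Bd" "u \<in> Off" unfolding U_def by blast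
    obtain dd where dd: "is_chain K 2 dd" "b = chain_boundary K 2 dd"
      using h(2) by (auto simp: Bd_def is_boundary_def numeral_2_eq_2)
    have uch: "is_chain (complex_minus K C) 1 u"
      using h(3) edge_minus1[of C K] CE by (auto simp: is_chain_def Off_def E_def)
    have finS: "finite (simplices (complex_minus K C) 1)"
      using finE edge_minus2[of _ K C] by (auto simp: E_def intro: finite_subset)
    have "chain_boundary (complex_minus K C) 1 u \<tau> = 0" for \<tau>
    proof -
      have "chain_boundary (complex_minus K C) 1 u \<tau> = chain_boundary K 1 u \<tau>"
        unfolding chain_boundary_def
        by (rule sum_supp[OF finS]) (use finE uch h(3) in \<open>auto simp: E_def is_chain_def Off_def\<close>)
      also have "\<dots> = chain_boundary K 1 c \<tau> - chain_boundary K 1 b \<tau>"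
        using h(1) by (simp add: chain_boundary_def sum_subtractf[symmetric] algebra_simps)
      also have "\<dots> = 0" using assms(2) dd_chain[OF K] dd by (simp add: is_cycle_def)
      finally show ?thesis .
    qed
    hence "is_cycle (complex_minus K C) 1 u" using uch by (simp add: is_cycle_def)
    moreover have "is_boundary K 1 (\<lambda>e. c e - u e)"
    proof -
      have "(\<lambda>e. c e - u e) = b" using h(1) by auto
      thus ?thesis using h(2) by (simp add: Bd_def)
    qed
    ultimately show False using assms(3) by (auto simp: homological_edge_cut_def)
  qed
  have dU: "d e \<notin> U" if eC: "e \<in> C" for e
  proof
    assume deU: "d e \<in> U"
    have "C - {e} \<subseteq> edges K" using CE by (auto simp: E_def)
    moreover have "\<not> homological_edge_cut K c (C - {e})" using assms(4) eC by blast
    ultimately have "\<exists>z. is_cycle (complex_minus K (C - {e})) 1 z \<and> is_boundary K 1 (\<lambda>x. c x - z x)"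
      unfolding homological_edge_cut_def by blast
    then obtain z where z: "is_cycle (complex_minus K (C - {e})) 1 z" "is_boundary K 1 (\<lambda>x. c x - z x)"
      by blast
    have zs: "\<sigma> \<in> E - (C - {e})" if "z \<sigma> \<noteq> 0" for \<sigma>
    proof -
      have "\<sigma> \<in> simplices (complex_minus K (C - {e})) 1"
        using z(1) that unfolding is_cycle_def is_chain_def by blast
      thus ?thesis using edge_minus2 unfolding E_def by blast
    qed
    define u where "u = z - z e *\<^sub>R d e"
    have "u \<in> Off" unfolding Off_def
    proof (intro CollectI allI impI)
      fix \<sigma> assume "u \<sigma> \<noteq> 0"
      hence "\<sigma> \<noteq> e" "z \<sigma> \<noteq> 0" by (auto simp: u_def d_def split: if_splits)
      thus "\<sigma> \<in> E - C" using zs by auto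
    qed
    moreover have "(\<lambda>x. c x - z x) \<in> Bd" using z(2) by (simp add: Bd_def)
    ultimately have "(\<lambda>x. c x - z x) + u \<in> U" unfolding U_def by blast
    hence "((\<lambda>x. c x - z x) + u) + z e *\<^sub>R d e \<in> U"
      using deU subU by (simp add: subspace_add subspace_scale)
    moreover have "((\<lambda>x. c x - z x) + u) + z e *\<^sub>R d e = c" by (auto simp: u_def)
    ultimately show False using cU by simp
  qed
  have ind: "S \<subseteq> C \<longrightarrow> (\<exists>h::('v set \<Rightarrow> real) \<Rightarrow> real. linear h \<and> (\<forall>x\<in>U. h x = 0) \<and> h c \<noteq> 0
      \<and> (\<forall>e\<in>S. h (d e) \<noteq> 0))" if "finite S" for S
    using that
  proof (induct S rule: finite_induct)
    case empty
    show ?case using functional_exists[OF subU cU] by force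
  next
    case (insert e S)
    show ?case
    proof
      assume sub: "insert e S \<subseteq> C"
      then obtain h :: "('v set \<Rightarrow> real) \<Rightarrow> real" where h: "linear h" "\<forall>x\<in>U. h x = 0" "h c \<noteq> 0" "\<forall>e\<in>S. h (d e) \<noteq> 0"
        using insert by auto
      obtain g :: "('v set \<Rightarrow> real) \<Rightarrow> real" where g: "linear g" "\<forall>x\<in>U. g x = 0" "g (d e) = 1"
        using functional_exists[OF subU dU] sub by blast
      define X where "X = insert c (insert (d e) (d ` S))"
      have finX: "finite X" using insert(1) by (simp add: X_def)
      obtain t where t: "t \<notin> (\<lambda>x. - h x / g x) ` X"
        using ex_new_if_finite[OF infinite_UNIV_char_0, of "(\<lambda>x. - h x / g x) ` X"] finX by auto
      have key: "h x + t * g x \<noteq> 0" if "x \<in> X" for x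
      proof -
        have hg: "h x \<noteq> 0 \<or> g x \<noteq> 0" using that h g by (auto simp: X_def)
        show ?thesis
        proof (cases "g x = 0")
          case True thus ?thesis using hg by simp
        next
          case False
          show ?thesis
          proof
            assume "h x + t * g x = 0"
            hence "t = - h x / g x" using False by (simp add: field_simps)
            thus False using t that by auto
          qed
        qed
      qed
      define h' where "h' = (\<lambda>y. h y + t * g y)"
      have hl: "h (x + y) = h x + h y" "h (r *\<^sub>R x) = r * h x" for x y r
        using h(1) unfolding linear_iff by simp_all
      have gl: "g (x + y) = g x + g y" "g (r *\<^sub>R x) = r * g x" for x y r
        using g(1) unfolding linear_iff by simp_all
      have "linear h'"
      proof (rule linearI)
        fix b1 b2 show "h' (b1 + b2) = h' b1 + h' b2" unfolding h'_def hl gl by (simp add: algebra_simps)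
      next
        fix r b show "h' (r *\<^sub>R b) = r *\<^sub>R h' b" unfolding h'_def hl gl by (simp add: algebra_simps)
      qed
      moreover have "\<forall>x\<in>U. h' x = 0" using h g by (simp add: h'_def)
      moreover have "h' c \<noteq> 0" using key by (simp add: h'_def X_def)
      moreover have "\<forall>e'\<in>insert e S. h' (d e') \<noteq> 0" using key by (auto simp: h'_def X_def)
      ultimately show "\<exists>h::('v set \<Rightarrow> real) \<Rightarrow> real. linear h \<and> (\<forall>x\<in>U. h x = 0) \<and> h c \<noteq> 0 \<and> (\<forall>e\<in>insert e S. h (d e) \<noteq> 0)"
        by blast
    qed
  qed
  obtain h :: "('v set \<Rightarrow> real) \<Rightarrow> real" where h: "linear h" "\<forall>x\<in>U. h x = 0" "h c \<noteq> 0" "\<forall>e\<in>C. h (d e) \<noteq> 0"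
    using ind[OF finC] by blast
  have hsum: "h (\<Sum>e\<in>E. a e *\<^sub>R d e) = (\<Sum>e\<in>E. a e * h (d e))" for a
    using h(1) finE by (simp add: linear_sum linear_scale)
  define \<phi> where "\<phi> = (\<lambda>e. h (d e) / h c)"
  have "is_cocycle1 K \<phi>"
    unfolding is_cocycle1_def
  proof
    fix \<sigma> assume sT: "\<sigma> \<in> simplices K 2"
    define w where "w = chain_boundary K 2 (d \<sigma>)"
    have "is_chain K 2 (d \<sigma>)" using sT by (auto simp: is_chain_def d_def)
    hence "w \<in> Bd" by (auto simp: Bd_def is_boundary_def w_def numeral_2_eq_2)
    hence hw: "h w = 0" using h(2) BdU by auto
    have wi: "w \<tau> = incidence \<sigma> \<tau>" for \<tau>
    proof -
      have "w \<tau> = (\<Sum>\<sigma>'\<in>simplices K 2. if \<sigma>' = \<sigma> then incidence \<sigma>' \<tau> else 0)"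
        unfolding w_def chain_boundary_def d_def by (rule sum.cong) auto
      also have "\<dots> = incidence \<sigma> \<tau>" using finT sT by simp
      finally show ?thesis .
    qed
    have "\<forall>\<tau>. w \<tau> \<noteq> 0 \<longrightarrow> \<tau> \<in> E"
    proof (intro allI impI)
      fix \<tau> assume "w \<tau> \<noteq> 0"
      hence nz: "incidence \<sigma> \<tau> \<noteq> 0" using wi by simp
      have i: "\<tau> \<subseteq> \<sigma> \<and> card \<tau> + 1 = card \<sigma>"
      proof (rule ccontr)
        assume a: "\<not> (\<tau> \<subseteq> \<sigma> \<and> card \<tau> + 1 = card \<sigma>)"
        have "incidence \<sigma> \<tau> = 0" unfolding incidence_def by (rule if_not_P[OF a])
        thus False using nz by simp
      qed
      have "card \<sigma> = 3" "\<sigma> \<in> K" using sT by (auto simp: simplices_def)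
      hence "card \<tau> = 2" using i by simp
      hence "\<tau> \<noteq> {}" by auto
      hence "\<tau> \<in> K" using face_in[OF K \<open>\<sigma> \<in> K\<close>] i by blast
      thus "\<tau> \<in> E" using \<open>card \<tau> = 2\<close> by (simp add: E_def simplices_def)
    qed
    hence weq: "w = (\<Sum>e\<in>E. w e *\<^sub>R d e)" using represent[OF finE] unfolding d_def by blast
    have "h w = h (\<Sum>e\<in>E. w e *\<^sub>R d e)" using weq by (rule arg_cong)
    also have "\<dots> = (\<Sum>e\<in>E. w e * h (d e))" by (rule hsum)
    finally have "(\<Sum>e\<in>E. w e * h (d e)) = 0" using hw by simp
    hence "(\<Sum>e\<in>E. \<phi> e * incidence \<sigma> e) = 0"
      by (simp add: \<phi>_def wi sum_divide_distrib[symmetric] mult.commute)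
    thus "(\<Sum>e\<in>edges K. \<phi> e * incidence \<sigma> e) = 0" by (simp add: E_def)
  qed
  moreover have "supp1 K \<phi> = C"
  proof -
    have "h (d e) = 0" if "e \<in> E - C" for e
    proof -
      have "d e \<in> Off" unfolding Off_def d_def using that by auto
      thus ?thesis using h(2) OffU by blast
    qed
    thus ?thesis using h(3,4) CE by (auto simp: supp1_def \<phi>_def E_def)
  qed
  moreover have "cochain_eval K \<phi> c = 1"
  proof -
    have ceq: "c = (\<Sum>e\<in>E. c e *\<^sub>R d e)" using represent[OF finE cchain] unfolding d_def by blast
    have "h c = h (\<Sum>e\<in>E. c e *\<^sub>R d e)" using ceq by (rule arg_cong)
    also have "\<dots> = (\<Sum>e\<in>E. c e * h (d e))" by (rule hsum)
    finally have "h c = (\<Sum>e\<in>E. c e * h (d e))" .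
    hence "(\<Sum>e\<in>E. \<phi> e * c e) = 1" using h(3)
      by (simp add: \<phi>_def sum_divide_distrib[symmetric] mult.commute)
    thus ?thesis by (simp add: cochain_eval_def E_def)
  qed
  ultimately show ?thesis by blast
qed

end
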